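(* Let the setting and notation be as in the context. Assume the velocity field $\boldsymbol{v}(\boldsymbol{x},t)=\mathbb{E}[\alpha_t'\boldsymbol{x}_0+\sigma_t'\boldsymbol{z}\mid \boldsymbol{x}_t=\boldsymbol{x}]$ is $L$-Lipschitz in its first argument: $\|\boldsymbol{v}(\boldsymbol{x}_1,t)-\boldsymbol{v}(\boldsymbol{x}_2,t)\|_2\le L\|\boldsymbol{x}_1-\boldsymbol{x}_2\|_2$ for all $\boldsymbol{x}_1,\boldsymbol{x}_2\in\mathbb{R}^n$, $t\in[0,1]$. Consider the SDEI loss $$\mathcal{L}_{\mathrm{SDEI}}(\theta)=\mathbb{E}_{\boldsymbol{x}_0,\boldsymbol{z},t,s,\,r\sim\mathcal{U}(t,s)}\big\|\boldsymbol{f}_\theta(\boldsymbol{x}_t,t,s)-\boldsymbol{v}\big(\boldsymbol{x}_t+(r-t)\boldsymbol{f}_{\theta^-}(\boldsymbol{x}_t,t,r),\,r\big)\big\|_2^2 .$$ Then for each fixed $t$ there is $h>0$ such that the following holds: if $\boldsymbol{f}_\theta$ attains the minimum of $\mathcal{L}_{\mathrm{SDEI}}$ (in the stop-gradient sense: with $\theta^-=\theta$ held fixed in the target, $\boldsymbol{f}_\theta$ minimizes the loss over all functions of $(\boldsymbol{x}_t,t,s)$), then $\boldsymbol{f}_\theta(\boldsymbol{x}_t,t,s)=\boldsymbol{f}(\boldsymbol{x}_t,t,s)$ for all $s$ with $|s-t|\le h$, where $\boldsymbol{f}$ is the secant function.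
   Context: Let $p_d$ be a data distribution on $\mathbb{R}^n$, $\boldsymbol{x}_0\sim p_d$, $\boldsymbol{z}\sim\mathcal{N}(\boldsymbol{0},\boldsymbol{I})$ independent, and let $\alpha_t,\sigma_t$ be differentiable functions on $[0,1]$ with derivatives $\alpha_t',\sigma_t'$. Set $\boldsymbol{x}_t=\alpha_t\boldsymbol{x}_0+\sigma_t\boldsymbol{z}$. The velocity field is $\boldsymbol{v}(\boldsymbol{x}_t,t)=\mathbb{E}[\alpha_t'\boldsymbol{x}_0+\sigma_t'\boldsymbol{z}\mid\boldsymbol{x}_t]$, and the probability-flow ODE is $\frac{d\boldsymbol{x}_t}{dt}=\boldsymbol{v}(\boldsymbol{x}_t,t)$; for a point $\boldsymbol{x}_t$ at time $t$, $\boldsymbol{x}_r$ denotes the solution of this ODE at time $r$ passing through $\boldsymbol{x}_t$ at time $t$. The secant function is $\boldsymbol{f}(\boldsymbol{x}_t,t,s)=\boldsymbol{v}(\boldsymbol{x}_t,t)$ if $s=t$ and $\boldsymbol{f}(\boldsymbol{x}_t,t,s)=\frac{1}{s-t}\int_t^s\boldsymbol{v}(\boldsymbol{x}_r,r)\,dr$ if $s\neq t$. $\boldsymbol{f}_\theta(\boldsymbol{x},t,s)$ is a parametrized function (neural network) $\mathbb{R}^n\times[0,1]\times[0,1]\to\mathbb{R}^n$; $\theta^-$ denotes a stop-gradient copy of $\theta$ (same value, not differentiated). $r\sim\mathcal{U}(t,s)$ means $r$ uniform on $[\min\{t,s\},\max\{t,s\}]$, independent of $\boldsymbol{x}_0,\boldsymbol{z}$;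 $t,s$ are sampled independently of $\boldsymbol{x}_0,\boldsymbol{z}$. *)

theory Defs
  imports "HOL-Probability.Probability"
begin

definition unif_between :: "real \<Rightarrow> real \<Rightarrow> real measure" where
  "unif_between t s =
     (if s = t then return lborel t else uniform_measure lborel {min t s..max t s})"

text \<open>Phi is the flow of the probability-flow ODE dx/dr = v(x,r) on [0,1]:
  Phi x t r is the solution at time r passing through x at time t.\<close>
definition is_flow :: "('a::euclidean_space \<Rightarrow> real \<Rightarrow> 'a) \<Rightarrow> ('a \<Rightarrow> real \<Rightarrow> real \<Rightarrow> 'a) \<Rightarrow> bool" where
  "is_flow v Phi \<longleftrightarrow>
     (\<forall>x. \<forall>t\<in>{0..1}. Phi x t t = x \<and>
        (\<forall>r\<in>{0..1}. ((\<lambda>\<rho>. Phi x t \<rho>) has_vector_derivative v (Phi x t r) r) (at r within {0..1})))"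

definition oint :: "real \<Rightarrow> real \<Rightarrow> (real \<Rightarrow> 'a::euclidean_space) \<Rightarrow> 'a" where
  "oint t s g = (if t \<le> s then integral {t..s} g else - integral {s..t} g)"

definition secant :: "('a::euclidean_space \<Rightarrow> real \<Rightarrow> 'a) \<Rightarrow> ('a \<Rightarrow> real \<Rightarrow> real \<Rightarrow> 'a)
    \<Rightarrow> 'a \<Rightarrow> real \<Rightarrow> real \<Rightarrow> 'a" where
  "secant v Phi x t s =
     (if s = t then v x t else (1 / (s - t)) *\<^sub>R oint t s (\<lambda>r. v (Phi x t r) r))"

text \<open>SDEI target v(x_t + (r-t) f_{theta^-}(x_t,t,r), r), with theta^- = theta frozen.\<close>
definition sdei_target :: "('a::euclidean_space \<Rightarrow> real \<Rightarrow> 'a) \<Rightarrow> ('a \<Rightarrow> real \<Rightarrow> real \<Rightarrow> 'a)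
    \<Rightarrow> 'a \<Rightarrow> real \<Rightarrow> real \<Rightarrow> 'a" where
  "sdei_target v fm x t r = v (x + (r - t) *\<^sub>R fm x t r) r"

definition sdei_cond_loss :: "('a::euclidean_space \<Rightarrow> real \<Rightarrow> 'a) \<Rightarrow> ('a \<Rightarrow> real \<Rightarrow> real \<Rightarrow> 'a)
    \<Rightarrow> 'a \<Rightarrow> real \<Rightarrow> real \<Rightarrow> 'a \<Rightarrow> ennreal" where
  "sdei_cond_loss v fm x t s c =
     (\<integral>\<^sup>+ r. ennreal ((norm (c - sdei_target v fm x t r))\<^sup>2) \<partial>unif_between t s)"

text \<open>fm attains the minimum of the SDEI loss over all functions of (x_t,t,s)
  in the stop-gradient sense: for every (x,t,s) the target is a random variable,
  the loss is finite, and fm x t s minimises the conditional loss.\<close>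
definition sdei_minimizer :: "('a::euclidean_space \<Rightarrow> real \<Rightarrow> 'a) \<Rightarrow> ('a \<Rightarrow> real \<Rightarrow> real \<Rightarrow> 'a) \<Rightarrow> bool" where
  "sdei_minimizer v fm \<longleftrightarrow>
     (\<forall>x. \<forall>t\<in>{0..1}. \<forall>s\<in>{0..1}.
        sdei_target v fm x t \<in> borel_measurable (unif_between t s) \<and>
        sdei_cond_loss v fm x t s (fm x t s) < \<infinity> \<and>
        (\<forall>c. sdei_cond_loss v fm x t s (fm x t s) \<le> sdei_cond_loss v fm x t s c))"

end

theory Submission
  imports Defs
begin


lemma unif_density:
  fixes a b :: real assumes ab: "a < b"
  shows "uniform_measure lborel {a..b} = density lborel (\<lambda>r. ennreal (indicator {a..b} r / (b - a)))"
proof -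
  have e: "1 / ennreal (b - a) = ennreal (1 / (b - a))"
    using ab by (metis divide_ennreal ennreal_1 zero_le_one diff_gt_0_iff_gt)
  show ?thesis
  unfolding uniform_measure_def using ab e
  by (intro density_cong) (auto simp: indicator_def)
qed

lemma unif_hk:
  fixes Y :: "real \<Rightarrow> 'a::euclidean_space" and a b :: real
  assumes ab: "a < b" and Ym[measurable]: "Y \<in> borel_measurable lborel"
    and iY: "integrable (uniform_measure lborel {a..b}) Y"
  shows "Y integrable_on {a..b} \<and> integral {a..b} Y = (b - a) *\<^sub>R integral\<^sup>L (uniform_measure lborel {a..b}) Y"
proof -
  have nn: "AE r in lborel. 0 \<le> indicator {a..b} r / (b - a)" using ab by auto
  have i2: "integrable lborel (\<lambda>r. (indicator {a..b} r / (b - a)) *\<^sub>R Y r)"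
    using iY unfolding unif_density[OF ab] by (subst (asm) integrable_density) (use nn in auto)
  have "integrable lborel (\<lambda>r. (b - a) *\<^sub>R ((indicator {a..b} r / (b - a)) *\<^sub>R Y r))"
    using i2 by (rule integrable_scaleR_right)
  moreover have "(\<lambda>r. (b - a) *\<^sub>R ((indicator {a..b} r / (b - a)) *\<^sub>R Y r)) = (\<lambda>r. indicator {a..b} r *\<^sub>R Y r)"
    using ab by (auto simp: fun_eq_iff)
  ultimately have si: "set_integrable lborel {a..b} Y"
    unfolding set_integrable_def by simp
  have "integral\<^sup>L (uniform_measure lborel {a..b}) Y = (\<integral>r. (indicator {a..b} r / (b - a)) *\<^sub>R Y r \<partial>lborel)"
    unfolding unif_density[OF ab] by (subst integral_density) (use nn in auto)
  also have "\<dots> = (\<integral>r. (1 / (b - a)) *\<^sub>R (indicator {a..b} r *\<^sub>R Y r) \<partial>lborel)"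
    by (intro Bochner_Integration.integral_cong) (auto simp: indicator_def)
  also have "\<dots> = (1 / (b - a)) *\<^sub>R (LINT r:{a..b}|lborel. Y r)"
    unfolding set_lebesgue_integral_def by (rule integral_scaleR_right)
  also have "(LINT r:{a..b}|lborel. Y r) = integral {a..b} Y"
    using set_borel_integral_eq_integral[OF si] by simp
  finally show ?thesis using set_borel_integral_eq_integral[OF si] ab by simp
qed



lemma mean_min:
  fixes Y :: "real \<Rightarrow> 'a::euclidean_space"
  assumes P: "prob_space M" and Ym[measurable]: "Y \<in> borel_measurable M"
   and fin: "(\<integral>\<^sup>+r. ennreal ((norm (c0 - Y r))\<^sup>2) \<partial>M) < \<infinity>"
   and mn: "\<And>c. (\<integral>\<^sup>+r. ennreal ((norm (c0 - Y r))\<^sup>2) \<partial>M) \<le> (\<integral>\<^sup>+r. ennreal ((norm (c - Y r))\<^sup>2) \<partial>M)"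
  shows "integrable M Y \<and> c0 = integral\<^sup>L M Y"
proof -
  interpret prob_space M by (rule P)
  have sq: "integrable M (\<lambda>r. (norm (c0 - Y r))\<^sup>2)"
    by (rule integrableI_nonneg) (use fin in auto)
  have i1: "integrable M (\<lambda>r. 1 + (norm (c0 - Y r))\<^sup>2)"
    using sq by simp
  have "integrable M (\<lambda>r. c0 - Y r)"
  proof (rule Bochner_Integration.integrable_bound[OF i1])
    show "AE x in M. norm (c0 - Y x) \<le> norm (1 + (norm (c0 - Y x))\<^sup>2)"
    proof (intro AE_I2)
      fix x
      have "norm (c0 - Y x) \<le> 1 + (norm (c0 - Y x))\<^sup>2"
      proof -
        have "0 \<le> (norm (c0 - Y x) - 1/2)\<^sup>2" by simp
        then show ?thesis by (simp add: power2_eq_square algebra_simps)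
      qed
      then show "norm (c0 - Y x) \<le> norm (1 + (norm (c0 - Y x))\<^sup>2)" by simp
    qed
  qed measurable
  then have iY: "integrable M Y"
    using Bochner_Integration.integrable_diff[OF integrable_const[of c0], of "\<lambda>r. c0 - Y r"] by simp
  define m where "m = integral\<^sup>L M Y"
  have sq2: "integrable M (\<lambda>r. (norm (m - Y r))\<^sup>2)"
  proof (rule Bochner_Integration.integrable_bound[of _ "\<lambda>r. 2 * (norm (m - c0))\<^sup>2 + 2 * (norm (c0 - Y r))\<^sup>2"])
    show "integrable M (\<lambda>r. 2 * (norm (m - c0))\<^sup>2 + 2 * (norm (c0 - Y r))\<^sup>2)"
      using sq by simp
    show "AE x in M. norm ((norm (m - Y x))\<^sup>2) \<le> norm (2 * (norm (m - c0))\<^sup>2 + 2 * (norm (c0 - Y x))\<^sup>2)"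
    proof (intro AE_I2)
      fix x
      have "norm (m - Y x) \<le> norm (m - c0) + norm (c0 - Y x)"
        using norm_triangle_ineq[of "m - c0" "c0 - Y x"] by simp
      then have "(norm (m - Y x))\<^sup>2 \<le> (norm (m - c0) + norm (c0 - Y x))\<^sup>2"
        by (simp add: power_mono)
      also have "\<dots> \<le> 2 * (norm (m - c0))\<^sup>2 + 2 * (norm (c0 - Y x))\<^sup>2"
      proof -
        have "0 \<le> (norm (m - c0) - norm (c0 - Y x))\<^sup>2" by simp
        then show ?thesis by (simp add: power2_eq_square algebra_simps)
      qed
      finally show "norm ((norm (m - Y x))\<^sup>2) \<le> norm (2 * (norm (m - c0))\<^sup>2 + 2 * (norm (c0 - Y x))\<^sup>2)"
        by simp
    qed
  qed measurable
  have pw: "(norm (c0 - Y r))\<^sup>2 = (norm (c0 - m))\<^sup>2 + 2 * ((c0 - m) \<bullet> (m - Y r)) + (norm (m - Y r))\<^sup>2" for r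
    by (simp add: power2_norm_eq_inner inner_diff_left inner_diff_right inner_commute algebra_simps)
  have iin: "integrable M (\<lambda>r. (c0 - m) \<bullet> (m - Y r))"
    using \<open>integrable M (\<lambda>r. c0 - Y r)\<close> iY by (intro integrable_inner_right) auto
  have inner0: "(\<integral>r. (c0 - m) \<bullet> (m - Y r) \<partial>M) = 0"
  proof -
    have "(\<integral>r. (c0 - m) \<bullet> (m - Y r) \<partial>M) = (c0 - m) \<bullet> (\<integral>r. (m - Y r) \<partial>M)"
      using iY by (intro integral_inner_right) auto
    also have "(\<integral>r. (m - Y r) \<partial>M) = m - m"
      using iY by (simp add: Bochner_Integration.integral_diff m_def prob_space)
    finally show ?thesis by simp
  qed
  have eq: "(\<integral>r. (norm (c0 - Y r))\<^sup>2 \<partial>M) = (norm (c0 - m))\<^sup>2 + (\<integral>r. (norm (m - Y r))\<^sup>2 \<partial>M)"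
    unfolding pw using iin sq2 inner0 by (simp add: prob_space)
  have "ennreal (\<integral>r. (norm (c0 - Y r))\<^sup>2 \<partial>M) \<le> ennreal (\<integral>r. (norm (m - Y r))\<^sup>2 \<partial>M)"
    using mn[of m] by (simp add: nn_integral_eq_integral[OF sq] nn_integral_eq_integral[OF sq2])
  then have "(\<integral>r. (norm (c0 - Y r))\<^sup>2 \<partial>M) \<le> (\<integral>r. (norm (m - Y r))\<^sup>2 \<partial>M)"
    by (simp add: ennreal_le_iff)
  then have "(norm (c0 - m))\<^sup>2 \<le> 0" using eq by simp
  then have "c0 = m" by simp
  then show ?thesis using iY m_def by simp
qed



lemma min_eq:
  fixes v :: "'a::euclidean_space \<Rightarrow> real \<Rightarrow> 'a"
  assumes m: "sdei_minimizer v fm" and t: "t \<in> {0..1}" and s: "s \<in> {0..1}" and st: "s \<noteq> t"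
  shows "sdei_target v fm x t integrable_on {min t s..max t s}
       \<and> (\<lambda>r. norm (sdei_target v fm x t r)) integrable_on {min t s..max t s}
       \<and> fm x t s = (1 / (s - t)) *\<^sub>R oint t s (sdei_target v fm x t)"
proof -
  define a where "a = min t s"
  define b where "b = max t s"
  define Y where "Y = sdei_target v fm x t"
  have ab: "a < b" using st by (auto simp: a_def b_def)
  have U: "unif_between t s = uniform_measure lborel {a..b}"
    using st by (simp add: unif_between_def a_def b_def)
  have mm: "Y \<in> borel_measurable (unif_between t s)"
    "sdei_cond_loss v fm x t s (fm x t s) < \<infinity>"
    "\<And>c. sdei_cond_loss v fm x t s (fm x t s) \<le> sdei_cond_loss v fm x t s c"
    using m[unfolded sdei_minimizer_def, THEN spec[of _ x], THEN bspec[OF _ t], THEN bspec[OF _ s]] unfolding Y_def by auto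
  have Ym0: "Y \<in> borel_measurable (uniform_measure lborel {a..b})"
    using mm(1) unfolding U .
  have se: "sets (uniform_measure lborel {a..b}) = sets lborel" by simp
  have Ym: "Y \<in> borel_measurable lborel"
    using Ym0 unfolding measurable_cong_sets[OF se refl] .
  have P: "prob_space (uniform_measure lborel {a..b})"
    using ab by (intro prob_space_uniform_measure) auto
  have mean: "integrable (uniform_measure lborel {a..b}) Y \<and> fm x t s = integral\<^sup>L (uniform_measure lborel {a..b}) Y"
    using mean_min[OF P Ym0, of "fm x t s"] mm(2) mm(3)
    unfolding sdei_cond_loss_def U Y_def[symmetric] by blast
  have h1: "Y integrable_on {a..b} \<and> integral {a..b} Y = (b - a) *\<^sub>R fm x t s"
    using unif_hk[OF ab Ym] mean by simp
  have h2: "(\<lambda>r. norm (Y r)) integrable_on {a..b}"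
    using unif_hk[OF ab, of "\<lambda>r. norm (Y r)"] mean Ym by (simp add: integrable_norm)
  have "fm x t s = (1 / (s - t)) *\<^sub>R oint t s Y"
  proof (cases "t \<le> s")
    case True
    then show ?thesis using h1 st unfolding oint_def a_def b_def by (simp add: max_def min_def)
  next
    case False
    then have "oint t s Y = - ((t - s) *\<^sub>R fm x t s)"
      using h1 unfolding oint_def a_def b_def by (simp add: max_def min_def)
    also have "\<dots> = (s - t) *\<^sub>R fm x t s" by (simp add: algebra_simps)
    finally show ?thesis using st by simp
  qed
  then show ?thesis using h1 h2 unfolding Y_def a_def b_def by simp
qed

lemma min_eq_t:
  fixes v :: "'a::euclidean_space \<Rightarrow> real \<Rightarrow> 'a"
  assumes m: "sdei_minimizer v fm" and t: "t \<in> {0..1}"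
  shows "fm x t t = v x t"
proof -
  define Y where "Y = sdei_target v fm x t"
  have mm: "Y \<in> borel_measurable (return lborel t)"
    "\<And>c. sdei_cond_loss v fm x t t (fm x t t) \<le> sdei_cond_loss v fm x t t c"
    using m[unfolded sdei_minimizer_def, THEN spec[of _ x], THEN bspec[OF _ t], THEN bspec[OF _ t]] unfolding Y_def unif_between_def by auto
  have L: "sdei_cond_loss v fm x t t c = ennreal ((norm (c - v x t))\<^sup>2)" for c
  proof -
    have "(\<lambda>r. ennreal ((norm (c - Y r))\<^sup>2)) \<in> borel_measurable (return lborel t)"
      using mm(1) by measurable
    then show ?thesis
      unfolding sdei_cond_loss_def unif_between_def Y_def[symmetric]
      by (simp add: nn_integral_return Y_def sdei_target_def)
  qed
  have "ennreal ((norm (fm x t t - v x t))\<^sup>2) \<le> ennreal 0"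
    using mm(2)[of "v x t"] unfolding L by simp
  then have "(norm (fm x t t - v x t))\<^sup>2 \<le> 0" by (simp add: ennreal_le_iff)
  then show ?thesis by simp
qed



lemma oint_bound:
  fixes D :: "real \<Rightarrow> 'a::euclidean_space"
  assumes "D integrable_on {min t s..max t s}" "0 \<le> B" "\<forall>r\<in>{min t s..max t s}. norm (D r) \<le> B"
  shows "norm (oint t s D) \<le> B * \<bar>s - t\<bar>"
proof (cases "t \<le> s")
  case True
  have "norm (integral {t..s} D) \<le> B * Henstock_Kurzweil_Integration.content {t..s}"
    using has_integral_bound_real[of B "{}" D "integral {t..s} D" t s] assms True
    by (auto simp: min_def max_def)
  then show ?thesis using True by (simp add: oint_def)
next
  case False
  have "norm (integral {s..t} D) \<le> B * Henstock_Kurzweil_Integration.content {s..t}"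
    using has_integral_bound_real[of B "{}" D "integral {s..t} D" s t] assms False
    by (auto simp: min_def max_def)
  then show ?thesis using False by (simp add: oint_def)
qed

lemma oint_diff:
  fixes f g :: "real \<Rightarrow> 'a::euclidean_space"
  assumes "f integrable_on {min t s..max t s}" "g integrable_on {min t s..max t s}"
  shows "oint t s (\<lambda>r. f r - g r) = oint t s f - oint t s g"
  using assms by (cases "t \<le> s") (auto simp: oint_def min_def max_def integral_diff)

lemma oint_cong:
  fixes f g :: "real \<Rightarrow> 'a::euclidean_space"
  assumes "\<forall>r\<in>{min t s..max t s}. f r = g r"
  shows "oint t s f = oint t s g"
  using assms by (cases "t \<le> s") (auto simp: oint_def min_def max_def intro!: integral_cong)

lemma flow_oint:
  fixes v :: "'a::euclidean_space \<Rightarrow> real \<Rightarrow> 'a"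
  assumes flow: "is_flow v Phi" and t: "t \<in> {0..1}" and s: "s \<in> {0..1}"
  shows "(\<lambda>r. v (Phi x t r) r) integrable_on {min t s..max t s} \<and> Phi x t s = x + oint t s (\<lambda>r. v (Phi x t r) r)"
proof -
  have F: "Phi x t t = x" "\<And>r. r \<in> {0..1} \<Longrightarrow> ((\<lambda>\<rho>. Phi x t \<rho>) has_vector_derivative v (Phi x t r) r) (at r within {0..1})"
    using flow t unfolding is_flow_def by auto
  have ftc: "((\<lambda>r. v (Phi x t r) r) has_integral (Phi x t d - Phi x t c)) {c..d}"
    if "0 \<le> c" "c \<le> d" "d \<le> 1" for c d
  proof (rule fundamental_theorem_of_calculus[OF \<open>c \<le> d\<close>])
    fix r assume "r \<in> {c..d}"
    then have "r \<in> {0..1}" using that by auto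
    from has_vector_derivative_within_subset[OF F(2)[OF this]]
    show "((\<lambda>\<rho>. Phi x t \<rho>) has_vector_derivative v (Phi x t r) r) (at r within {c..d})"
      using that by auto
  qed
  show ?thesis
  proof (cases "t \<le> s")
    case True
    then show ?thesis using ftc[of t s] t s F(1)
      by (auto simp: oint_def min_def max_def integral_unique integrable_on_def)
  next
    case False
    then show ?thesis using ftc[of s t] t s F(1)
      by (auto simp: oint_def min_def max_def integral_unique integrable_on_def)
  qed
qed

lemma main:
  fixes v :: "'a::euclidean_space \<Rightarrow> real \<Rightarrow> 'a"
  assumes lip: "\<forall>x1 x2. \<forall>\<tau>\<in>{0..1}. norm (v x1 \<tau> - v x2 \<tau>) \<le> L * norm (x1 - x2)"
    and flow: "is_flow v Phi" and t: "t \<in> {0..1}" and m: "sdei_minimizer v fm"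
    and h: "h = 1 / (2 * (\<bar>L\<bar> + 1))"
    and s0: "s0 \<in> {0..1}" and s0h: "\<bar>s0 - t\<bar> \<le> h"
  shows "fm x t s0 = secant v Phi x t s0"
proof -
  define a where "a = max 0 (t - h)"
  define b where "b = min 1 (t + h)"
  have hpos: "0 < h" using h by (simp add: add_pos_nonneg)
  have hh: "2 * (\<bar>L\<bar> * h) + 2 * h = 1" using h by (simp add: field_simps)
  have hL: "\<bar>L\<bar> * h \<le> 1/2" using hh hpos by linarith
  have ab: "a \<le> t" "t \<le> b" "0 \<le> a" "b \<le> 1" using t hpos by (auto simp: a_def b_def)
  have W: "s \<in> {a..b} \<longleftrightarrow> s \<in> {0..1} \<and> \<bar>s - t\<bar> \<le> h" for s
    by (auto simp: a_def b_def abs_if)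
  have seg: "{min t s..max t s} \<subseteq> {a..b}" if "s \<in> {a..b}" for s
    using that ab by auto
  define T where "T = sdei_target v fm x t"
  define P where "P = (\<lambda>r. v (Phi x t r) r)"
  define g where "g = (\<lambda>r. x + (r - t) *\<^sub>R fm x t r)"
  define e where "e = (\<lambda>r. g r - Phi x t r)"
  have Teq: "T r = v (g r) r" for r unfolding T_def g_def sdei_target_def by simp
  have Tint: "T integrable_on {min t s..max t s} \<and> (\<lambda>r. norm (T r)) integrable_on {min t s..max t s}"
    if "s \<in> {0..1}" for s
  proof (cases "s = t")
    case True
    then show ?thesis by (auto intro: has_integral_refl simp: integrable_on_def)
  next
    case False
    then show ?thesis using min_eq[OF m t that False, of x] unfolding T_def by blast
  qed
  have gint: "g s = x + oint t s T" if "s \<in> {0..1}" for s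
  proof (cases "s = t")
    case True
    then show ?thesis by (simp add: g_def oint_def)
  next
    case False
    have "fm x t s = (1 / (s - t)) *\<^sub>R oint t s T"
      using min_eq[OF m t that False, of x] unfolding T_def by blast
    then show ?thesis using False by (simp add: g_def)
  qed
  have Pint: "P integrable_on {min t s..max t s} \<and> Phi x t s = x + oint t s P" if "s \<in> {0..1}" for s
    using flow_oint[OF flow t that, of x] unfolding P_def by blast
  have eint: "e s = oint t s (\<lambda>r. T r - P r)" if "s \<in> {0..1}" for s
    using gint[OF that] Pint[OF that] Tint[OF that] oint_diff[of T t s P] by (simp add: e_def)
  have Dbound: "norm (T r - P r) \<le> \<bar>L\<bar> * norm (e r)" if "r \<in> {0..1}" for r
  proof -
    have "norm (T r - P r) \<le> L * norm (g r - Phi x t r)"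
      using lip that unfolding Teq P_def by blast
    also have "\<dots> \<le> \<bar>L\<bar> * norm (e r)" unfolding e_def
      by (intro mult_right_mono) auto
    finally show ?thesis .
  qed
  have NTab: "(\<lambda>r. norm (T r)) integrable_on {a..b}"
  proof (rule Henstock_Kurzweil_Integration.integrable_combine[OF ab(1) ab(2)])
    show "(\<lambda>r. norm (T r)) integrable_on {a..t}"
    proof -
      have "min t a = a" "max t a = t" "a \<in> {0..1}" using ab t by auto
      then show ?thesis using Tint[of a] by simp
    qed
    show "(\<lambda>r. norm (T r)) integrable_on {t..b}"
    proof -
      have "min t b = t" "max t b = b" "b \<in> {0..1}" using ab t by auto
      then show ?thesis using Tint[of b] by simp
    qed
  qed
  define K where "K = integral {a..b} (\<lambda>r. norm (T r))"
  have gb: "norm (oint t s T) \<le> K" if "s \<in> {a..b}" for s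
  proof -
    have s01: "s \<in> {0..1}" using that ab by auto
    have "norm (oint t s T) = norm (integral {min t s..max t s} T)"
      by (simp add: oint_def min_def max_def)
    also have "\<dots> \<le> integral {min t s..max t s} (\<lambda>r. norm (T r))"
      using Tint[OF s01] by (intro integral_norm_bound_integral) auto
    also have "\<dots> \<le> K" unfolding K_def
      using Tint[OF s01] NTab seg[OF that] by (intro integral_subset_le) auto
    finally show ?thesis .
  qed
  have "continuous_on {a..b} (Phi x t)"
  proof (rule continuous_on_subset[of "{0..1}"])
    show "continuous_on {0..1} (Phi x t)"
    proof (rule continuous_on_vector_derivative)
      fix r :: real assume "r \<in> {0..1}"
      then show "(Phi x t has_vector_derivative v (Phi x t r) r) (at r within {0..1})"
        using flow t unfolding is_flow_def by blast
    qed
  qed (use ab in auto)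
  then have "bounded (Phi x t ` {a..b})"
    by (intro compact_imp_bounded compact_continuous_image) auto
  then obtain BP where BP: "\<And>s. s \<in> {a..b} \<Longrightarrow> norm (Phi x t s) \<le> BP"
    unfolding bounded_iff by (meson image_eqI)
  have eb: "norm (e s) \<le> norm x + K + BP" if "s \<in> {a..b}" for s
  proof -
    have s01: "s \<in> {0..1}" using that ab by auto
    have "norm (e s) = norm (x + oint t s T - Phi x t s)" unfolding e_def gint[OF s01] ..
    also have "\<dots> \<le> norm x + norm (oint t s T) + norm (Phi x t s)"
      using norm_triangle_ineq4[of "x + oint t s T" "Phi x t s"] norm_triangle_ineq[of x "oint t s T"] by linarith
    also have "\<dots> \<le> norm x + K + BP" using gb[OF that] BP[OF that] by simp
    finally show ?thesis .
  qed
  define M where "M = (SUP r\<in>{a..b}. norm (e r))"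
  have bdd: "bdd_above ((\<lambda>r. norm (e r)) ` {a..b})"
    using eb by (intro bdd_aboveI2) auto
  have neM: "{a..b} \<noteq> {}" using ab by auto
  have le_M: "norm (e s) \<le> M" if "s \<in> {a..b}" for s
    unfolding M_def using bdd that by (rule cSUP_upper2) auto
  have M0: "0 \<le> M" using le_M[of t] ab by (meson norm_ge_zero order_trans atLeastAtMost_iff)
  have half: "norm (e s) \<le> M / 2" if "s \<in> {a..b}" for s
  proof -
    have s01: "s \<in> {0..1}" using that ab by auto
    have "norm (e s) = norm (oint t s (\<lambda>r. T r - P r))" by (simp add: eint[OF s01])
    also have "\<dots> \<le> (\<bar>L\<bar> * M) * \<bar>s - t\<bar>"
    proof (rule oint_bound)
      show "(\<lambda>r. T r - P r) integrable_on {min t s..max t s}"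
        using Tint[OF s01] Pint[OF s01] by (intro integrable_diff) auto
      show "0 \<le> \<bar>L\<bar> * M" using M0 by simp
      show "\<forall>r\<in>{min t s..max t s}. norm (T r - P r) \<le> \<bar>L\<bar> * M"
      proof
        fix r assume r: "r \<in> {min t s..max t s}"
        then have rab: "r \<in> {a..b}" using seg[OF that] by auto
        then have "r \<in> {0..1}" using ab by auto
        then have "norm (T r - P r) \<le> \<bar>L\<bar> * norm (e r)" by (rule Dbound)
        also have "\<dots> \<le> \<bar>L\<bar> * M" using le_M[OF rab] by (intro mult_left_mono) auto
        finally show "norm (T r - P r) \<le> \<bar>L\<bar> * M" .
      qed
    qed
    also have "\<dots> \<le> (\<bar>L\<bar> * M) * h"
      using W[of s] that M0 by (intro mult_left_mono) auto
    also have "\<dots> = (\<bar>L\<bar> * h) * M" by simp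
    also have "\<dots> \<le> (1/2) * M" using hL M0 by (intro mult_right_mono) auto
    finally show ?thesis by simp
  qed
  have "(SUP r\<in>{a..b}. norm (e r)) \<le> M / 2"
    using neM half by (intro cSUP_least) auto
  then have "M \<le> M / 2" unfolding M_def .
  then have M00: "M = 0" using M0 by simp
  have geq: "g r = Phi x t r" if "r \<in> {a..b}" for r
    using le_M[OF that] M00 by (simp add: e_def)
  show ?thesis
  proof (cases "s0 = t")
    case True
    then show ?thesis using min_eq_t[OF m t, of x] by (simp add: secant_def)
  next
    case False
    have s0ab: "s0 \<in> {a..b}" using W s0 s0h by blast
    have "fm x t s0 = (1 / (s0 - t)) *\<^sub>R oint t s0 T"
      using min_eq[OF m t s0 False, of x] unfolding T_def by blast
    also have "oint t s0 T = oint t s0 P"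
    proof (rule oint_cong, rule ballI)
      fix r assume "r \<in> {min t s0..max t s0}"
      then have "r \<in> {a..b}" using seg[OF s0ab] by auto
      then show "T r = P r" unfolding Teq P_def geq by (simp add: geq)
    qed
    finally show ?thesis using False by (simp add: secant_def P_def)
  qed
qed

theorem theorem1:
  fixes v :: "'a::euclidean_space \<Rightarrow> real \<Rightarrow> 'a"
    and Phi :: "'a \<Rightarrow> real \<Rightarrow> real \<Rightarrow> 'a"
    and L t :: real
  assumes lip: "\<forall>x1 x2. \<forall>\<tau>\<in>{0..1}. norm (v x1 \<tau> - v x2 \<tau>) \<le> L * norm (x1 - x2)"
    and flow: "is_flow v Phi"
    and t: "t \<in> {0..1}"
  shows "\<exists>h>0. \<forall>f\<theta>. sdei_minimizer v f\<theta> \<longrightarrow>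
           (\<forall>x. \<forall>s\<in>{0..1}. \<bar>s - t\<bar> \<le> h \<longrightarrow> f\<theta> x t s = secant v Phi x t s)"
proof (intro exI conjI allI impI ballI)
  show "0 < 1 / (2 * (\<bar>L\<bar> + 1))" by (simp add: add_pos_nonneg)
  fix f\<theta> x s
  assume "sdei_minimizer v f\<theta>" "s \<in> {0..1}" "\<bar>s - t\<bar> \<le> 1 / (2 * (\<bar>L\<bar> + 1))"
  then show "f\<theta> x t s = secant v Phi x t s"
    using main[OF lip flow t, of f\<theta> "1 / (2 * (\<bar>L\<bar> + 1))" s x] by blast
qed

end
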